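(* There is a constant $\kappa_0>0$ such that $m(t,n)/n^q\le\kappa_0$ for all $t\in H$ and all $n\ge1$. Moreover, $$\frac1{n^p}\sum_{u\in H_n}\frac{m(u,n)}{n^q}\longrightarrow l\int_C\mathcal V(y)\,dy<\infty\qquad(n\to\infty).$$
   Context: $d=p+q$ with $p,q\ge1$. $K\le\mathbb{Z}^d$ is a subgroup of rank $q$ with basis $\bar v_1,\dots,\bar v_q$, $F\le\mathbb{Z}^d$ a subgroup of rank $p$ with basis $\bar u_1,\dots,\bar u_p$, $F\cap K=\{0\}$, and $G=F+K$ has finite index $l$ in $\mathbb{Z}^d$; $x_1,\dots,x_l$ are representatives of the cosets of $G$ in $\mathbb{Z}^d$. $H=\bigcup_{k=1}^l(x_k+F)$. For $u\in H$, $N(u)=\min\{\|u+v\|_\infty:v\in K\}$, and $H_n=\{u\in H:N(u)\le n\}$. $U$ ($d\times p$) has columns $\bar u_i$ and $V$ ($d\times q$) has columns $\bar v_j$. $C=\{y\in\mathbb{R}^p:\exists\lambda\in\mathbb{R}^q,\ \|Uy+V\lambda\|_\infty\le1\}$; for $y\in C$, $\mathcal V(y)$ is the $q$-dimensional volume of $P_y=\{\lambda\in\mathbb{R}^q:\|Uy+V\lambda\|_\infty\le1\}$. For $t\in\mathbb{Z}^d$ and $n\ge1$, $m(t,n)=\big|\{s\in\mathbb{Z}^d:\|s\|_\infty\le n\}\cap(t+K)\big|$. *)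

theory Defs
  imports "HOL-Analysis.Analysis"
begin

definition supn :: "int ^ 'd::finite \<Rightarrow> nat" where
  "supn s = Max (range (\<lambda>i. nat \<bar>s $ i\<bar>))"

definition zspan :: "('i::finite \<Rightarrow> int ^ 'd::finite) \<Rightarrow> (int ^ 'd) set" where
  "zspan w = {\<Sum>i\<in>UNIV. c i *s w i | c. True}"

definition zindep :: "('i::finite \<Rightarrow> int ^ 'd::finite) \<Rightarrow> bool" where
  "zindep w \<longleftrightarrow> (\<forall>c. (\<Sum>i\<in>UNIV. c i *s w i) = 0 \<longrightarrow> (\<forall>i. c i = 0))"

definition Nfun :: "(int ^ 'd::finite) set \<Rightarrow> int ^ 'd \<Rightarrow> nat" where
  "Nfun K u = (LEAST k. \<exists>v\<in>K. supn (u + v) = k)"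

definition mcount :: "(int ^ 'd::finite) set \<Rightarrow> int ^ 'd \<Rightarrow> nat \<Rightarrow> nat" where
  "mcount K t n = card ({s. supn s \<le> n} \<inter> (\<lambda>v. t + v) ` K)"

definition colmat :: "('i::finite \<Rightarrow> int ^ 'd::finite) \<Rightarrow> real ^ 'i ^ 'd" where
  "colmat w = (\<chi> r c. real_of_int (w c $ r))"

definition Pset :: "real ^ 'p::finite ^ 'd::finite \<Rightarrow> real ^ 'q::finite ^ 'd \<Rightarrow> real ^ 'p \<Rightarrow> (real ^ 'q) set" where
  "Pset U V y = {lam. infnorm (U *v y + V *v lam) \<le> 1}"

definition Cset :: "real ^ 'p::finite ^ 'd::finite \<Rightarrow> real ^ 'q::finite ^ 'd \<Rightarrow> (real ^ 'p) set" where
  "Cset U V = {y. \<exists>lam. infnorm (U *v y + V *v lam) \<le> 1}"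

definition Vol :: "real ^ 'p::finite ^ 'd::finite \<Rightarrow> real ^ 'q::finite ^ 'd \<Rightarrow> real ^ 'p \<Rightarrow> ennreal" where
  "Vol U V y = emeasure lborel (Pset U V y)"

end

theory Submission
  imports Defs
begin


lemma zspan_0: "0 \<in> zspan w"
  unfolding zspan_def by (auto intro!: exI[of _ "\<lambda>_. 0"])

lemma zspan_add: "a \<in> zspan w \<Longrightarrow> b \<in> zspan w \<Longrightarrow> a + b \<in> zspan w"
  unfolding zspan_def
proof clarify
  fix c d
  show "\<exists>e. (\<Sum>i\<in>UNIV. c i *s w i) + (\<Sum>i\<in>UNIV. d i *s w i) = (\<Sum>i\<in>UNIV. e i *s w i) \<and> True"
    by (rule exI[of _ "\<lambda>i. c i + d i"]) (simp add: vec_eq_iff sum_component sum.distrib algebra_simps)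
qed

lemma zspan_uminus: "a \<in> zspan w \<Longrightarrow> - a \<in> zspan w"
  unfolding zspan_def
proof clarify
  fix c
  show "\<exists>e. - (\<Sum>i\<in>UNIV. c i *s w i) = (\<Sum>i\<in>UNIV. e i *s w i) \<and> True"
    by (rule exI[of _ "\<lambda>i. - c i"]) (simp add: vec_eq_iff sum_component sum_negf)
qed

lemma zspan_diff: "a \<in> zspan w \<Longrightarrow> b \<in> zspan w \<Longrightarrow> a - b \<in> zspan w"
  using zspan_add[of a w "-b"] zspan_uminus[of b w] by simp

lemma zspan_smult: "a \<in> zspan w \<Longrightarrow> (m::int) *s a \<in> zspan w"
  unfolding zspan_def
proof clarify
  fix c
  show "\<exists>e. m *s (\<Sum>i\<in>UNIV. c i *s w i) = (\<Sum>i\<in>UNIV. e i *s w i) \<and> True"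
    by (rule exI[of _ "\<lambda>i. m * c i"]) (simp add: vec_eq_iff sum_component sum_distrib_left mult.assoc)
qed

lemma zindep_unique:
  assumes "zindep w" "(\<Sum>i\<in>UNIV. c i *s w i) = (\<Sum>i\<in>UNIV. d i *s w i)"
  shows "c = d"
proof -
  have "(\<Sum>i\<in>UNIV. (\<lambda>i. c i - d i) i *s w i) = 0"
    using assms(2) by (simp add: vec_eq_iff sum_component algebra_simps sum_subtractf)
  with assms(1) have "\<forall>i. c i - d i = 0" unfolding zindep_def
    by (drule_tac x="\<lambda>i. c i - d i" in spec) simp
  then show ?thesis by (auto simp: fun_eq_iff)
qed

lemma supn_le_iff: "supn s \<le> n \<longleftrightarrow> (\<forall>i. \<bar>s $ i\<bar> \<le> int n)"
  unfolding supn_def by (subst Max_le_iff) (auto, (metis nat_le_iff)+)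

lemma card_vecset:
  assumes "finite A"
  shows "card {z::'a ^ 'n::finite. \<forall>i. z $ i \<in> A} = card A ^ CARD('n)"
proof -
  have "{z::'a ^ 'n::finite. \<forall>i. z $ i \<in> A} = vec_lambda ` (PiE UNIV (\<lambda>_. A))"
    apply (auto simp: image_iff PiE_iff)
    subgoal for x by (rule bexI[of _ "vec_nth x"]) auto
    done
  moreover have "inj_on vec_lambda (PiE UNIV (\<lambda>_::'n. A))"
    by (auto simp: inj_on_def vec_lambda_inject)
  ultimately show ?thesis using assms by (simp add: card_image card_PiE)
qed

lemma card_box: "card {s::int ^ 'd::finite. supn s \<le> n} = (2*n+1) ^ CARD('d)"
proof -
  have "{s::int ^ 'd::finite. supn s \<le> n} = {z. \<forall>i. z $ i \<in> {-int n..int n}}"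
    by (auto simp: supn_le_iff abs_le_iff; smt)
  moreover have "card {-int n..int n} = 2*n+1" by simp
  ultimately show ?thesis using card_vecset[of "{-int n..int n}", where 'n='d] by simp
qed

lemma finite_box: "finite {s::int ^ 'd::finite. supn s \<le> n}"
  using card_box[of n, where 'd='d] by (metis card.infinite one_neq_zero add_eq_0_iff_both_eq_0 power_not_zero zero_neq_one)




locale L51 =
  fixes u :: "'p::finite \<Rightarrow> int ^ 'd::finite"
    and v :: "'q::finite \<Rightarrow> int ^ 'd"
    and x :: "nat \<Rightarrow> int ^ 'd"
    and l :: nat
  assumes dim: "CARD('d) = CARD('p) + CARD('q)"
    and indep_u: "zindep u"
    and indep_v: "zindep v"
    and FK: "zspan u \<inter> zspan v = {0}"
    and cover: "\<forall>s::int ^ 'd. \<exists>k\<in>{1..l}. s - x k \<in> {f + w | f w. f \<in> zspan u \<and> w \<in> zspan v}"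
    and distinct: "\<forall>j\<in>{1..l}. \<forall>k\<in>{1..l}.
                    x j - x k \<in> {f + w | f w. f \<in> zspan u \<and> w \<in> zspan v} \<longrightarrow> j = k"
begin

definition G where "G = {f + w | f w. f \<in> zspan u \<and> w \<in> zspan v}"
definition H where "H = (\<Union>k\<in>{1..l}. (\<lambda>f. x k + f) ` zspan u)"

lemma G_add: "a \<in> G \<Longrightarrow> b \<in> G \<Longrightarrow> a + b \<in> G"
  unfolding G_def
proof clarify
  fix f w f' w' assume "f \<in> zspan u" "w \<in> zspan v" "f' \<in> zspan u" "w' \<in> zspan v"
  then show "\<exists>f'' w''. f + w + (f' + w') = f'' + w'' \<and> f'' \<in> zspan u \<and> w'' \<in> zspan v"
    by (intro exI[of _ "f+f'"] exI[of _ "w+w'"]) (auto simp: zspan_add algebra_simps)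
qed

lemma G_uminus: "a \<in> G \<Longrightarrow> - a \<in> G"
  unfolding G_def
proof clarify
  fix f w assume "f \<in> zspan u" "w \<in> zspan v"
  then show "\<exists>f'' w''. - (f + w) = f'' + w'' \<and> f'' \<in> zspan u \<and> w'' \<in> zspan v"
    by (intro exI[of _ "-f"] exI[of _ "-w"]) (auto simp: zspan_uminus algebra_simps)
qed

lemma G_diff: "a \<in> G \<Longrightarrow> b \<in> G \<Longrightarrow> a - b \<in> G"
  using G_add[of a "-b"] G_uminus[of b] by simp

lemma cover': "\<exists>k\<in>{1..l}. s - x k \<in> G" using cover unfolding G_def by blast
lemma distinct': "j\<in>{1..l} \<Longrightarrow> k\<in>{1..l} \<Longrightarrow> x j - x k \<in> G \<Longrightarrow> j = k"
  using distinct unfolding G_def by blast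

lemma l_pos: "l \<ge> 1" using cover'[of 0] by auto

lemma decomp: "\<exists>k\<in>{1..l}. \<exists>f\<in>zspan u. \<exists>w\<in>zspan v. s = x k + f + w"
proof -
  obtain k where k: "k\<in>{1..l}" "s - x k \<in> G" using cover' by blast
  then obtain f w where "f \<in> zspan u" "w \<in> zspan v" "s - x k = f + w" unfolding G_def by blast
  then show ?thesis using k by (intro bexI[of _ k] bexI[of _ f] bexI[of _ w]) (auto simp: algebra_simps)
qed

lemma H_uniq:
  assumes "t \<in> H" "s - t \<in> zspan v" "t' \<in> H" "s - t' \<in> zspan v"
  shows "t = t'"
proof -
  obtain k f where k: "k \<in> {1..l}" "f \<in> zspan u" "t = x k + f" using assms(1) unfolding H_def by blast
  obtain k' f' where k': "k' \<in> {1..l}" "f' \<in> zspan u" "t' = x k' + f'" using assms(3) unfolding H_def by blast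
  have tt: "t - t' \<in> zspan v" using zspan_diff[OF assms(4) assms(2)] by simp
  have "x k - x k' = (f' - f) + (t - t')" using k k' by (simp add: algebra_simps)
  then have "x k - x k' \<in> G" unfolding G_def using tt zspan_diff[OF k'(2) k(2)] by blast
  then have "k = k'" using distinct' k k' by blast
  then have "f - f' = t - t'" using k k' by simp
  then have "f - f' \<in> zspan u \<inter> zspan v" using tt zspan_diff[OF k(2) k'(2)] by simp
  then have "f = f'" using FK by simp
  then show ?thesis using k k' \<open>k = k'\<close> by simp
qed

lemma H_exists: "\<exists>t\<in>H. s - t \<in> zspan v"
proof -
  obtain k f w where "k\<in>{1..l}" "f\<in>zspan u" "w\<in>zspan v" "s = x k + f + w" using decomp by blast
  then show ?thesis unfolding H_def by (intro bexI[of _ "x k + f"]) auto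
qed

definition hp where "hp s = (THE t. t \<in> H \<and> s - t \<in> zspan v)"

lemma hp: "hp s \<in> H" "s - hp s \<in> zspan v"
proof -
  have "\<exists>!t. t \<in> H \<and> s - t \<in> zspan v" using H_exists H_uniq by blast
  then have "hp s \<in> H \<and> s - hp s \<in> zspan v" unfolding hp_def by (rule theI')
  then show "hp s \<in> H" "s - hp s \<in> zspan v" by auto
qed

lemma Nfun_le: "w \<in> zspan v \<Longrightarrow> Nfun (zspan v) t \<le> supn (t + w)"
  unfolding Nfun_def by (rule Least_le) blast

lemma Nfun_attained: "\<exists>w\<in>zspan v. supn (t + w) = Nfun (zspan v) t"
  unfolding Nfun_def by (rule LeastI_ex) (use zspan_0 in blast)

lemma mem_transl: "s \<in> (\<lambda>w. t + w) ` zspan v \<longleftrightarrow> s - t \<in> zspan v"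
  by (auto simp: image_iff intro: bexI[of _ "s - t"])

lemma Hn_eq: "{t\<in>H. Nfun (zspan v) t \<le> n} = hp ` {s. supn s \<le> n}"
proof (intro equalityI subsetI)
  fix t assume t: "t \<in> {t\<in>H. Nfun (zspan v) t \<le> n}"
  obtain w where w: "w\<in>zspan v" "supn (t + w) = Nfun (zspan v) t" using Nfun_attained by blast
  have "hp (t + w) = t" using H_uniq[of "hp (t+w)" "t+w" t] hp[of "t+w"] t w by simp
  then show "t \<in> hp ` {s. supn s \<le> n}" using t w by (auto intro!: image_eqI[of _ _ "t+w"])
next
  fix t assume "t \<in> hp ` {s. supn s \<le> n}"
  then obtain s where s: "supn s \<le> n" "t = hp s" by blast
  have "Nfun (zspan v) t \<le> supn (t + (s - t))" using Nfun_le hp(2) s by blast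
  then show "t \<in> {t\<in>H. Nfun (zspan v) t \<le> n}" using s hp(1) by simp
qed

lemma finite_Hn: "finite {t\<in>H. Nfun (zspan v) t \<le> n}"
  unfolding Hn_eq by (rule finite_imageI[OF finite_box])

lemma sum_mcount: "(\<Sum>t\<in>{t\<in>H. Nfun (zspan v) t \<le> n}. mcount (zspan v) t n) = (2*n+1) ^ CARD('d)"
proof -
  let ?B = "{s::int^'d. supn s \<le> n}"
  let ?A = "\<lambda>t. ?B \<inter> (\<lambda>w. t + w) ` zspan v"
  have "?B = (\<Union>t\<in>{t\<in>H. Nfun (zspan v) t \<le> n}. ?A t)"
  proof (intro equalityI subsetI)
    fix s assume s: "s \<in> ?B"
    then have "hp s \<in> {t\<in>H. Nfun (zspan v) t \<le> n}" unfolding Hn_eq by blast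
    moreover have "s \<in> ?A (hp s)" using s hp(2) mem_transl by blast
    ultimately show "s \<in> (\<Union>t\<in>{t\<in>H. Nfun (zspan v) t \<le> n}. ?A t)" by blast
  qed auto
  moreover have "card (\<Union>t\<in>{t\<in>H. Nfun (zspan v) t \<le> n}. ?A t) = (\<Sum>t\<in>{t\<in>H. Nfun (zspan v) t \<le> n}. card (?A t))"
    by (rule card_UN_disjoint) (use finite_Hn finite_box H_uniq mem_transl in blast)+
  ultimately show ?thesis unfolding mcount_def using card_box[of n, where 'd='d] by simp
qed

end



definition rvec :: "int ^ 'n::finite \<Rightarrow> real ^ 'n" where
  "rvec z = (\<chi> i. real_of_int (z $ i))"
definition rfun :: "('i::finite \<Rightarrow> int) \<Rightarrow> real ^ 'i" where
  "rfun c = (\<chi> i. real_of_int (c i))"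

lemma rvec_add: "rvec (a + b) = rvec a + rvec b" by (simp add: rvec_def vec_eq_iff)
lemma rvec_diff: "rvec (a - b) = rvec a - rvec b" by (simp add: rvec_def vec_eq_iff)
lemma rvec_smult: "rvec (m *s a) = real_of_int m *\<^sub>R rvec a" by (simp add: rvec_def vec_eq_iff)
lemma rvec_nth[simp]: "rvec z $ i = real_of_int (z $ i)" by (simp add: rvec_def)
lemma rfun_nth[simp]: "rfun c $ i = real_of_int (c i)" by (simp add: rfun_def)

lemma colmat_rfun: "colmat w *v rfun c = rvec (\<Sum>i\<in>UNIV. c i *s w i)"
  by (simp add: vec_eq_iff matrix_vector_mult_def colmat_def sum_component rvec_def rfun_def mult.commute)

lemma infnorm_le1_cart: "infnorm (w::real^'n::finite) \<le> 1 \<longleftrightarrow> (\<forall>i. \<bar>w $ i\<bar> \<le> 1)"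
proof
  assume "infnorm w \<le> 1" then show "\<forall>i. \<bar>w $ i\<bar> \<le> 1" using component_le_infnorm_cart order_trans by blast
next
  assume "\<forall>i. \<bar>w $ i\<bar> \<le> 1"
  then show "infnorm w \<le> 1" unfolding infnorm_cart by (intro cSup_least) auto
qed

context L51 begin

definition LL :: "(real ^ 'p) \<times> (real ^ 'q) \<Rightarrow> real ^ 'd" where
  "LL e = colmat u *v fst e + colmat v *v snd e"

lemma linear_LL: "linear LL"
  unfolding LL_def
  by (intro linearI) (auto simp: matrix_vector_right_distrib scaleR_right_distrib matrix_vector_mult_scaleR)

definition gm :: "('p \<Rightarrow> int) \<times> ('q \<Rightarrow> int) \<Rightarrow> int ^ 'd" where
  "gm ab = (\<Sum>i\<in>UNIV. fst ab i *s u i) + (\<Sum>j\<in>UNIV. snd ab j *s v j)"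

definition lat :: "('p \<Rightarrow> int) \<times> ('q \<Rightarrow> int) \<Rightarrow> (real ^ 'p) \<times> (real ^ 'q)" where
  "lat ab = (rfun (fst ab), rfun (snd ab))"

lemma LL_lat: "LL (lat ab) = rvec (gm ab)"
  by (simp add: LL_def lat_def gm_def colmat_rfun rvec_add)

lemma gm_inj: "gm ab = gm ab' \<Longrightarrow> ab = ab'"
proof -
  assume eq: "gm ab = gm ab'"
  define f1 where "f1 = (\<Sum>i\<in>UNIV. fst ab i *s u i)"
  define f2 where "f2 = (\<Sum>i\<in>UNIV. fst ab' i *s u i)"
  define w1 where "w1 = (\<Sum>j\<in>UNIV. snd ab j *s v j)"
  define w2 where "w2 = (\<Sum>j\<in>UNIV. snd ab' j *s v j)"
  have e: "f1 - f2 = w2 - w1" using eq unfolding gm_def f1_def f2_def w1_def w2_def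
    by (simp add: algebra_simps)
  have "f1 \<in> zspan u" "f2 \<in> zspan u" "w1 \<in> zspan v" "w2 \<in> zspan v"
    unfolding f1_def f2_def w1_def w2_def zspan_def by blast+
  then have "f1 - f2 \<in> zspan u" "w2 - w1 \<in> zspan v" using zspan_diff by blast+
  then have "f1 - f2 \<in> zspan u \<inter> zspan v" using e by simp
  then have "f1 - f2 = 0" using FK by blast
  then have "f1 = f2" "w1 = w2" using e by simp_all
  then have "fst ab = fst ab'" "snd ab = snd ab'"
    unfolding f1_def f2_def w1_def w2_def
    using zindep_unique[OF indep_u] zindep_unique[OF indep_v] by blast+
  then show "ab = ab'" by (simp add: prod_eq_iff)
qed

lemma G_gm: "g \<in> G \<longleftrightarrow> (\<exists>ab. g = gm ab)"
proof
  assume "g \<in> G"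
  then obtain c d where "g = (\<Sum>i\<in>UNIV. c i *s u i) + (\<Sum>j\<in>UNIV. d j *s v j)"
    unfolding G_def zspan_def by blast
  then show "\<exists>ab. g = gm ab" unfolding gm_def by (intro exI[of _ "(c,d)"]) simp
next
  assume "\<exists>ab. g = gm ab"
  then obtain ab where "g = gm ab" by blast
  then show "g \<in> G" unfolding G_def gm_def zspan_def by blast
qed

lemma mult_in_G: "\<exists>m::int. m \<noteq> 0 \<and> m *s z \<in> G"
proof -
  define \<phi> where "\<phi> a = (SOME k. k \<in> {1..l} \<and> (int a) *s z - x k \<in> G)" for a :: nat
  have \<phi>: "\<phi> a \<in> {1..l} \<and> (int a) *s z - x (\<phi> a) \<in> G" for a
    unfolding \<phi>_def by (rule someI_ex) (use cover' in blast)
  have "\<phi> ` {1..l+1} \<subseteq> {1..l}" using \<phi> by auto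
  then have "card (\<phi> ` {1..l+1}) \<le> l" using card_mono[of "{1..l}"] by fastforce
  then have "\<not> inj_on \<phi> {1..l+1}" using card_image by fastforce
  then obtain a b where ab: "a \<in> {1..l+1}" "b \<in> {1..l+1}" "a \<noteq> b" "\<phi> a = \<phi> b"
    unfolding inj_on_def by blast
  have "(int a) *s z - x (\<phi> a) - ((int b) *s z - x (\<phi> a)) \<in> G"
    using G_diff \<phi>[of a] \<phi>[of b] ab(4) by metis
  moreover have "(int a) *s z - x (\<phi> a) - ((int b) *s z - x (\<phi> a)) = (int a - int b) *s z"
    by (simp add: vec_eq_iff algebra_simps)
  ultimately show ?thesis using ab(3) by (intro exI[of _ "int a - int b"]) auto
qed

lemma LL_surj_int: "\<exists>e. LL e = rvec z"
proof -
  obtain m where m: "m \<noteq> 0" "m *s z \<in> G" using mult_in_G by blast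
  then obtain ab where ab: "m *s z = gm ab" using G_gm by blast
  have "LL ((1 / real_of_int m) *\<^sub>R lat ab) = (1 / real_of_int m) *\<^sub>R rvec (m *s z)"
    using linear_LL by (simp add: linear_scale LL_lat ab)
  also have "\<dots> = rvec z" using m by (simp add: rvec_smult)
  finally show ?thesis by blast
qed

lemma LL_surj: "surj LL"
proof -
  have "subspace (range LL)" using linear_subspace_image[OF linear_LL subspace_UNIV] by simp
  moreover have "Basis \<subseteq> range LL"
  proof
    fix b :: "real^'d" assume "b \<in> Basis"
    then obtain i where "b = axis i 1" by (auto simp: Basis_vec_def)
    then have "b = rvec (axis i 1)" by (simp add: vec_eq_iff axis_def rvec_def)
    then show "b \<in> range LL" using LL_surj_int by (metis rangeI)
  qed
  ultimately have "span Basis \<subseteq> range LL" by (metis span_minimal)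
  then show ?thesis by (auto simp: span_Basis)
qed

lemma LL_inj: "inj LL"
proof -
  have P: "finite_dimensional_vector_space_pair (scaleR::_\<Rightarrow>_\<Rightarrow>(real^'p) \<times> (real^'q)) Basis (scaleR::_\<Rightarrow>_\<Rightarrow>real^'d) Basis"
    by unfold_locales
  show ?thesis
    by (rule finite_dimensional_vector_space_pair.linear_surjective_imp_injective[OF P])
      (use linear_LL LL_surj dim in \<open>auto simp: linear_def[symmetric] dim_raw_def[symmetric] dim_UNIV\<close>)
qed

end



context L51 begin

lemma kappa_bound: "\<exists>\<kappa>0>0. \<forall>t. \<forall>n::nat\<ge>1. real (mcount (zspan v) t n) \<le> \<kappa>0 * real n ^ CARD('q)"
proof -
  obtain g where g: "linear g" "g \<circ> LL = id"
    using linear_injective_left_inverse[OF linear_LL LL_inj] by blast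
  have "bounded_linear g" using g(1) by (simp add: linear_conv_bounded_linear)
  then obtain B where B: "B > 0" "\<And>w. norm (g w) \<le> norm w * B"
    using bounded_linear.pos_bounded by blast
  define M where "M = 2 * B * real CARD('d)"
  have M0: "M \<ge> 0" using B unfolding M_def by simp
  define \<kappa> where "\<kappa> = (2*M+1) ^ CARD('q)"
  have "\<kappa> > 0" unfolding \<kappa>_def using M0 by simp
  moreover have "real (mcount (zspan v) t n) \<le> \<kappa> * real n ^ CARD('q)" if n: "n \<ge> 1" for t n
  proof -
    define A where "A = {s. supn s \<le> n} \<inter> (\<lambda>w. t + w) ` zspan v"
    show ?thesis
    proof (cases "A = {}")
      case True
      then show ?thesis unfolding mcount_def A_def[symmetric] using \<open>\<kappa> > 0\<close> by simp
    next
      case False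
      then obtain s0 where s0: "s0 \<in> A" by blast
      define N where "N = \<lfloor>M * real n\<rfloor>"
      have N0: "N \<ge> 0" unfolding N_def using M0 by simp
      have inK: "s - s0 \<in> zspan v" if "s \<in> A" for s
      proof -
        have "s - t \<in> zspan v" "s0 - t \<in> zspan v" using that s0 mem_transl unfolding A_def by blast+
        from zspan_diff[OF this] show ?thesis by simp
      qed
      define coef where "coef s = (SOME c. s - s0 = (\<Sum>j\<in>UNIV. c j *s v j))" for s
      have coef: "s - s0 = (\<Sum>j\<in>UNIV. coef s j *s v j)" if sA: "s \<in> A" for s
      proof -
        obtain c where "s - s0 = (\<Sum>j\<in>UNIV. c j *s v j)" using inK[OF sA] unfolding zspan_def by blast
        then show ?thesis unfolding coef_def by (rule someI[where P="\<lambda>c. s - s0 = (\<Sum>j\<in>UNIV. c j *s v j)"])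
      qed
      have inj: "inj_on coef A"
      proof (rule inj_onI)
        fix s s' assume "s \<in> A" "s' \<in> A" "coef s = coef s'"
        then have "s - s0 = s' - s0" using coef by metis
        then show "s = s'" by simp
      qed
      have bound: "\<bar>coef s j\<bar> \<le> N" if s: "s \<in> A" for s j
      proof -
        have "LL (0, rfun (coef s)) = rvec (s - s0)"
          by (simp add: LL_def colmat_rfun coef[OF s] matrix_vector_mult_0_right)
        then have eq: "(0, rfun (coef s)) = g (rvec (s - s0))" using g(2) by (metis comp_apply id_apply)
        have "real_of_int \<bar>coef s j\<bar> = \<bar>rfun (coef s) $ j\<bar>" by simp
        also have "\<dots> \<le> norm (rfun (coef s))" by (rule component_le_norm_cart)
        also have "\<dots> \<le> norm ((0::real^'p), rfun (coef s))" by (rule norm_snd_le)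
        also have "\<dots> \<le> norm (rvec (s - s0)) * B" using eq B(2) by metis
        also have "\<dots> \<le> (\<Sum>i\<in>UNIV. \<bar>rvec (s - s0) $ i\<bar>) * B"
          using B(1) norm_le_l1_cart[of "rvec (s - s0)"] by (intro mult_right_mono) auto
        also have "\<dots> \<le> (\<Sum>i\<in>(UNIV::'d set). 2 * real n) * B"
        proof (intro mult_right_mono sum_mono)
          fix i
          have "supn s \<le> n" "supn s0 \<le> n" using s s0 unfolding A_def by auto
          then have "\<bar>s $ i\<bar> \<le> int n" "\<bar>s0 $ i\<bar> \<le> int n" using supn_le_iff by blast+
          then show "\<bar>rvec (s - s0) $ i\<bar> \<le> 2 * real n" by simp
        qed (use B in auto)
        also have "\<dots> = M * real n" unfolding M_def by simp
        finally have "real_of_int \<bar>coef s j\<bar> \<le> M * real n" .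
        then show ?thesis unfolding N_def by linarith
      qed
      have "coef ` A \<subseteq> PiE UNIV (\<lambda>_. {-N..N})"
        using bound by (force simp: abs_le_iff)
      then have "card (coef ` A) \<le> card (PiE (UNIV::'q set) (\<lambda>_. {-N..N}))"
        by (intro card_mono) (auto intro!: finite_PiE)
      also have "\<dots> = nat (2*N+1) ^ CARD('q)" by (simp add: card_PiE)
      finally have c1: "card A \<le> nat (2*N+1) ^ CARD('q)" using card_image[OF inj] by simp
      have "real (nat (2*N+1)) \<le> (2*M+1) * real n"
      proof -
        have "real_of_int N \<le> M * real n" unfolding N_def by simp
        then have "real (nat (2*N+1)) \<le> 2 * (M * real n) + 1" using N0 by simp
        also have "\<dots> \<le> (2*M+1) * real n" using n M0 by (simp add: algebra_simps)
        finally show ?thesis .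
      qed
      then have "real (nat (2*N+1)) ^ CARD('q) \<le> ((2*M+1) * real n) ^ CARD('q)"
        by (intro power_mono) auto
      then have "real (card A) \<le> ((2*M+1) * real n) ^ CARD('q)"
        using c1 by (metis of_nat_le_iff of_nat_power order_trans)
      then show ?thesis unfolding mcount_def A_def[symmetric] \<kappa>_def by (simp add: power_mult_distrib)
    qed
  qed
  ultimately show ?thesis by blast
qed

end



lemma lborel_transl:
  fixes c :: "'a::euclidean_space"
  assumes A: "A \<in> sets borel"
  shows "emeasure lborel {e. c + e \<in> A} = emeasure lborel A"
proof -
  have "emeasure lborel A = emeasure (distr lborel borel ((+) c)) A" by (simp add: lborel_distr_plus)
  also have "\<dots> = emeasure lborel ((+) c -` A \<inter> space lborel)"
    by (rule emeasure_distr) (use A in auto)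
  finally show ?thesis by (simp add: vimage_def)
qed

definition Qn :: "(real ^ 'n::finite) set" where
  "Qn = {y. \<forall>i. 0 \<le> y $ i \<and> y $ i < 1}"

lemma Qn_borel: "Qn \<in> sets borel"
  unfolding Qn_def by measurable

lemma One_nth: "(One :: real^'n::finite) $ i = 1"
proof -
  have "axis i (1::real) \<in> (Basis :: (real^'n) set)" unfolding Basis_vec_def by auto
  then have "inner (\<Sum>(Basis :: (real^'n) set)) (axis i 1) = 1" by (rule inner_sum_Basis)
  then show ?thesis by (metis cart_eq_inner_axis)
qed

lemma One_nth': "(\<Sum>x\<in>(Basis::(real^'n::finite) set). x $ i) = 1"
  using One_nth[of i] by simp

lemma emeasure_Qn: "emeasure lborel (Qn :: (real ^ 'n::finite) set) = 1"
proof -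
  have s1: "box 0 One \<subseteq> (Qn :: (real ^ 'n::finite) set)"
    unfolding Qn_def by (auto simp: mem_box_cart One_nth One_nth' less_imp_le)
  have s2: "Qn \<subseteq> cbox 0 (One :: real ^ 'n)"
    unfolding Qn_def by (auto simp: mem_box_cart One_nth One_nth' less_imp_le)
  have m: "(Qn :: (real ^ 'n::finite) set) \<in> sets lborel" using Qn_borel by simp
  have "emeasure lborel (box 0 (One :: real ^ 'n)) \<le> emeasure lborel (Qn :: (real ^ 'n::finite) set)"
    by (rule emeasure_mono[OF s1 m])
  moreover have "emeasure lborel (Qn :: (real ^ 'n::finite) set) \<le> emeasure lborel (cbox 0 (One :: real ^ 'n))"
    by (rule emeasure_mono[OF s2]) simp
  moreover have "emeasure lborel (box 0 (One :: real ^ 'n)) = 1" "emeasure lborel (cbox 0 (One :: real ^ 'n)) = 1"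
    by (simp_all add: emeasure_lborel_box_eq emeasure_lborel_cbox_eq)
  ultimately show ?thesis by (metis antisym)
qed

lemma emeasure_QE: "emeasure lborel (Qn \<times> Qn :: ((real ^ 'p::finite) \<times> (real ^ 'q::finite)) set) = 1"
proof -
  have "emeasure (lborel \<Otimes>\<^sub>M lborel) (Qn \<times> Qn :: ((real ^ 'p::finite) \<times> (real ^ 'q::finite)) set) =
        emeasure lborel (Qn :: (real ^ 'p) set) * emeasure lborel (Qn :: (real ^ 'q) set)"
    by (rule lborel.emeasure_pair_measure_Times) (simp_all add: Qn_borel)
  then show ?thesis by (simp add: lborel_prod emeasure_Qn)
qed

lemma null_hyperplane:
  fixes f :: "'a::euclidean_space \<Rightarrow> real"
  assumes f: "linear f"
  shows "{e. f e = 1} \<in> null_sets lborel"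
proof -
  define a where "a = (\<Sum>b\<in>Basis. f b *\<^sub>R b)"
  have fa: "f e = a \<bullet> e" for e
  proof -
    have "f e = f (\<Sum>b\<in>Basis. (e \<bullet> b) *\<^sub>R b)" by (simp add: euclidean_representation)
    also have "\<dots> = (\<Sum>b\<in>Basis. (e \<bullet> b) * f b)" using f by (simp add: linear_sum linear_scale)
    also have "\<dots> = a \<bullet> e" unfolding a_def by (simp add: inner_sum_left inner_sum_right mult.commute inner_commute)
    finally show ?thesis .
  qed
  have eq: "{e. f e = 1} = {e. a \<bullet> e = 1}" using fa by auto
  have "negligible {e. a \<bullet> e = 1}" by (rule negligible_hyperplane) simp
  then have "{e. a \<bullet> e = 1} \<in> null_sets lebesgue" by (simp add: negligible_iff_null_sets)
  moreover have "{e. a \<bullet> e = (1::real)} \<in> sets borel" by measurable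
  ultimately show ?thesis using eq null_sets_completion_iff by (metis sets_lborel)
qed




context L51 begin

lemma LL_meas: "LL \<in> borel_measurable borel"
  using linear_LL by (intro borel_measurable_continuous_onI linear_continuous_on) (simp add: linear_conv_bounded_linear)

lemma LL_vimage: "X \<in> sets borel \<Longrightarrow> LL -` X \<in> sets borel"
  by (rule measurable_sets_borel[OF LL_meas]) simp

definition Dz :: "int ^ 'd \<Rightarrow> (real ^ 'd) set" where
  "Dz z = {w. w + rvec z \<in> Qn}"

lemma Dz_borel: "Dz z \<in> sets borel"
  unfolding Dz_def Qn_def by measurable

definition flz :: "real ^ 'd \<Rightarrow> int ^ 'd" where
  "flz w = (\<chi> i. - \<lfloor>w $ i\<rfloor>)"

lemma Qn_shift_iff: "w + rvec z \<in> Qn \<longleftrightarrow> z = flz w"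
proof -
  have "(0 \<le> w $ i + real_of_int (z $ i) \<and> w $ i + real_of_int (z $ i) < 1) \<longleftrightarrow> z $ i = - \<lfloor>w $ i\<rfloor>" for i
  proof -
    have "z $ i = - \<lfloor>w $ i\<rfloor> \<longleftrightarrow> \<lfloor>w $ i\<rfloor> = - z $ i" by auto
    also have "\<dots> \<longleftrightarrow> real_of_int (- z $ i) \<le> w $ i \<and> w $ i < real_of_int (- z $ i) + 1" by (rule floor_eq_iff)
    finally show ?thesis by auto
  qed
  then show ?thesis unfolding Qn_def flz_def by (auto simp: vec_eq_iff)
qed

lemma mem_Dz: "w \<in> Dz z \<longleftrightarrow> z = flz w"
  unfolding Dz_def mem_Collect_eq by (rule Qn_shift_iff)

definition QE :: "((real ^ 'p) \<times> (real ^ 'q)) set" where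
  "QE = {e. (\<forall>i. 0 \<le> fst e $ i \<and> fst e $ i < 1) \<and> (\<forall>j. 0 \<le> snd e $ j \<and> snd e $ j < 1)}"

lemma QE_eq: "QE = Qn \<times> Qn" unfolding QE_def Qn_def by auto

lemma QE_borel: "QE \<in> sets borel"
proof -
  have "(Qn::(real^'p) set) \<times> (Qn::(real^'q) set) \<in> sets (borel \<Otimes>\<^sub>M borel)"
    by (intro pair_measureI Qn_borel)
  then show ?thesis unfolding QE_eq by (simp only: borel_prod)
qed

lemma emeasure_QE': "emeasure lborel QE = 1"
  unfolding QE_eq by (rule emeasure_QE)

lemma transl_borel: "A \<in> sets borel \<Longrightarrow> {e::'a::euclidean_space. e - c \<in> A} \<in> sets borel"
proof -
  assume A: "A \<in> sets borel"
  have "(\<lambda>e. e - c) \<in> borel_measurable borel"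
    by (intro borel_measurable_continuous_onI continuous_intros)
  from measurable_sets_borel[OF this A] show ?thesis by (simp add: vimage_def)
qed

definition fl :: "(real ^ 'p) \<times> (real ^ 'q) \<Rightarrow> ('p \<Rightarrow> int) \<times> ('q \<Rightarrow> int)" where
  "fl e = ((\<lambda>i. \<lfloor>fst e $ i\<rfloor>), (\<lambda>j. \<lfloor>snd e $ j\<rfloor>))"

lemma floor_iff': "(real_of_int a \<le> y \<and> y - real_of_int a < 1) \<longleftrightarrow> a = \<lfloor>y\<rfloor>"
proof -
  have "a = \<lfloor>y\<rfloor> \<longleftrightarrow> \<lfloor>y\<rfloor> = a" by auto
  also have "\<dots> \<longleftrightarrow> real_of_int a \<le> y \<and> y < real_of_int a + 1" by (rule floor_eq_iff)
  finally show ?thesis by linarith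
qed

lemma QE_shift_iff: "e - lat ab \<in> QE \<longleftrightarrow> ab = fl e"
proof -
  have "e - lat ab \<in> QE \<longleftrightarrow> (\<forall>i. fst ab i = \<lfloor>fst e $ i\<rfloor>) \<and> (\<forall>j. snd ab j = \<lfloor>snd e $ j\<rfloor>)"
    unfolding QE_def lat_def by (simp add: floor_iff')
  also have "\<dots> \<longleftrightarrow> ab = fl e" unfolding fl_def by (auto simp: prod_eq_iff fun_eq_iff)
  finally show ?thesis .
qed

lemma mu_transl:
  assumes X: "X \<in> sets borel"
  shows "emeasure lborel (LL -` {w. w + rvec z \<in> X}) = emeasure lborel (LL -` X)"
proof -
  obtain e0 where e0: "LL e0 = rvec z" using LL_surj_int by blast
  have "LL -` {w. w + rvec z \<in> X} = {e. e0 + e \<in> LL -` X}"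
    using e0 linear_add[OF linear_LL] by (auto simp: add.commute)
  then show ?thesis using lborel_transl[OF LL_vimage[OF X], of e0] by simp
qed

lemma mu_Dz: "emeasure lborel (LL -` Dz z) = emeasure lborel (LL -` Qn)"
  unfolding Dz_def by (rule mu_transl) (rule Qn_borel)

definition Y :: "nat \<Rightarrow> ('p \<Rightarrow> int) \<times> ('q \<Rightarrow> int) \<Rightarrow> ((real ^ 'p) \<times> (real ^ 'q)) set" where
  "Y k ab = QE \<inter> LL -` Dz (x k + gm ab)"

lemma Y_borel: "Y k ab \<in> sets borel"
  unfolding Y_def using QE_borel LL_vimage[OF Dz_borel] by blast

lemma countable_idx: "countable (UNIV :: (('p \<Rightarrow> int) \<times> ('q \<Rightarrow> int)) set)"
  by simp

lemma tile_k: "emeasure lborel (LL -` Dz (x k)) = emeasure lborel (\<Union>ab. Y k ab)"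
proof -
  define T where "T ab = LL -` Dz (x k) \<inter> {e. e - lat ab \<in> QE}" for ab
  have T_borel: "T ab \<in> sets borel" for ab
  proof -
    have "{e. e - lat ab \<in> QE} \<in> sets borel" by (rule transl_borel[OF QE_borel])
    then show ?thesis unfolding T_def using LL_vimage[OF Dz_borel] by blast
  qed
  have cov: "LL -` Dz (x k) = (\<Union>ab. T ab)"
  proof (intro equalityI subsetI)
    fix e assume e: "e \<in> LL -` Dz (x k)"
    have "e - lat (fl e) \<in> QE" using QE_shift_iff by simp
    then have "e \<in> T (fl e)" using e unfolding T_def by simp
    then show "e \<in> (\<Union>ab. T ab)" by blast
  qed (auto simp: T_def)
  have dT: "disjoint_family_on T UNIV"
    unfolding disjoint_family_on_def
  proof (intro ballI impI)
    fix ab ab' :: "('p \<Rightarrow> int) \<times> ('q \<Rightarrow> int)" assume ne: "ab \<noteq> ab'"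
    show "T ab \<inter> T ab' = {}"
    proof (rule ccontr)
      assume "T ab \<inter> T ab' \<noteq> {}"
      then obtain e where "e - lat ab \<in> QE" "e - lat ab' \<in> QE" unfolding T_def by blast
      then have "ab = fl e" "ab' = fl e" using QE_shift_iff by blast+
      then show False using ne by simp
    qed
  qed
  have "emeasure lborel (LL -` Dz (x k)) = (\<integral>\<^sup>+ab. emeasure lborel (T ab) \<partial>count_space UNIV)"
    unfolding cov by (rule emeasure_UN_countable) (use T_borel countable_idx dT in auto)
  also have "\<dots> = (\<integral>\<^sup>+ab. emeasure lborel (Y k ab) \<partial>count_space UNIV)"
  proof (rule nn_integral_cong)
    fix ab
    have "{e. lat ab + e \<in> T ab} = Y k ab"
    proof -
      have 1: "LL (lat ab + e) \<in> Dz (x k) \<longleftrightarrow> LL e \<in> Dz (x k + gm ab)" for e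
        unfolding Dz_def using linear_add[OF linear_LL, of "lat ab" e]
        by (simp add: LL_lat rvec_add algebra_simps)
      have 2: "lat ab + e - lat ab = e" for e by simp
      show ?thesis unfolding T_def Y_def using 1 2 by auto
    qed
    then show "emeasure lborel (T ab) = emeasure lborel (Y k ab)"
      using lborel_transl[OF T_borel, of "lat ab" ab] by simp
  qed
  also have "\<dots> = emeasure lborel (\<Union>ab. Y k ab)"
  proof (rule emeasure_UN_countable[symmetric])
    show "disjoint_family_on (Y k) UNIV"
      unfolding disjoint_family_on_def
    proof (intro ballI impI)
      fix ab ab' :: "('p \<Rightarrow> int) \<times> ('q \<Rightarrow> int)" assume ne: "ab \<noteq> ab'"
      show "Y k ab \<inter> Y k ab' = {}"
      proof (rule ccontr)
        assume "Y k ab \<inter> Y k ab' \<noteq> {}"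
        then obtain e where "LL e \<in> Dz (x k + gm ab)" "LL e \<in> Dz (x k + gm ab')" unfolding Y_def by blast
        then have "x k + gm ab = flz (LL e)" "x k + gm ab' = flz (LL e)" using mem_Dz by blast+
        then have "x k + gm ab = x k + gm ab'" by simp
        then have "gm ab = gm ab'" by (rule add_left_imp_eq)
        then show False using ne gm_inj by blast
      qed
    qed
  qed (use Y_borel countable_idx in auto)
  finally show ?thesis .
qed

end



context L51 begin

lemma l_muQ: "of_nat l * emeasure lborel (LL -` Qn) = 1"
proof -
  define W where "W k = (\<Union>ab. Y k ab)" for k
  have W_borel: "W k \<in> sets borel" for k
    unfolding W_def by (rule sets.countable_UN'') (use Y_borel countable_idx in auto)
  have dW: "disjoint_family_on W {1..l}"
    unfolding disjoint_family_on_def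
  proof (intro ballI impI)
    fix k k' assume k: "k \<in> {1..l}" "k' \<in> {1..l}" and ne: "k \<noteq> k'"
    show "W k \<inter> W k' = {}"
    proof (rule ccontr)
      assume "W k \<inter> W k' \<noteq> {}"
      then obtain e ab ab' where "LL e \<in> Dz (x k + gm ab)" "LL e \<in> Dz (x k' + gm ab')"
        unfolding W_def Y_def by blast
      then have "x k + gm ab = flz (LL e)" "x k' + gm ab' = flz (LL e)" using mem_Dz by blast+
      then have "x k - x k' = gm ab' - gm ab" by (simp add: algebra_simps)
      moreover have "gm ab' - gm ab \<in> G" using G_gm G_diff by blast
      ultimately have "k = k'" using distinct' k by simp
      then show False using ne by simp
    qed
  qed
  have cov: "(\<Union>k\<in>{1..l}. W k) = QE"
  proof (intro equalityI subsetI)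
    fix e assume e: "e \<in> QE"
    obtain k f w where kfw: "k\<in>{1..l}" "f\<in>zspan u" "w\<in>zspan v" "flz (LL e) = x k + f + w"
      using decomp by blast
    obtain a where a: "f = (\<Sum>i\<in>UNIV. a i *s u i)" using kfw(2) unfolding zspan_def by blast
    obtain b where b: "w = (\<Sum>j\<in>UNIV. b j *s v j)" using kfw(3) unfolding zspan_def by blast
    have "flz (LL e) = x k + gm (a, b)" using kfw(4) a b by (simp add: gm_def add.assoc)
    then have "LL e \<in> Dz (x k + gm (a, b))" using mem_Dz by simp
    then have "e \<in> W k" unfolding W_def Y_def using e by blast
    then show "e \<in> (\<Union>k\<in>{1..l}. W k)" using kfw(1) by blast
  qed (auto simp: W_def Y_def)
  have "(\<Sum>k\<in>{1..l}. emeasure lborel (W k)) = emeasure lborel (\<Union>k\<in>{1..l}. W k)"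
    by (rule sum_emeasure) (use W_borel dW in auto)
  also have "\<dots> = 1" using cov emeasure_QE' by simp
  finally have "(\<Sum>k\<in>{1..l}. emeasure lborel (W k)) = 1" .
  moreover have "emeasure lborel (W k) = emeasure lborel (LL -` Qn)" for k
    unfolding W_def using tile_k[of k] mu_Dz[of "x k"] by simp
  ultimately show ?thesis by simp
qed

lemma muQ: "emeasure lborel (LL -` Qn) = ennreal (1 / real l)"
proof -
  have "ennreal (1 / real l) = ennreal (1 / real l) * (of_nat l * emeasure lborel (LL -` Qn))"
    using l_muQ by simp
  also have "\<dots> = (ennreal (1 / real l) * ennreal (real l)) * emeasure lborel (LL -` Qn)"
    by (simp add: ennreal_of_nat_eq_real_of_nat mult.assoc)
  also have "ennreal (1 / real l) * ennreal (real l) = 1"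
    using l_pos by (simp add: ennreal_mult''[symmetric])
  finally show ?thesis by simp
qed

definition HC :: "(real ^ 'd) set" where
  "HC = {w. \<forall>i. -1 \<le> w $ i \<and> w $ i < 1}"

lemma mu_HC: "emeasure lborel (LL -` HC) = 2 ^ CARD('d) * emeasure lborel (LL -` Qn)"
proof -
  define Zs where "Zs = {z::int^'d. \<forall>i. z $ i \<in> {0,1}}"
  have cardZ: "card Zs = 2 ^ CARD('d)" unfolding Zs_def using card_vecset[of "{0::int,1}", where 'n='d] by (simp add: numeral_2_eq_2)
  have finZ: "finite Zs" using cardZ by (metis card.infinite power_not_zero zero_neq_numeral)
  have HCeq: "HC = (\<Union>z\<in>Zs. Dz z)"
  proof (intro equalityI subsetI)
    fix w assume w: "w \<in> HC"
    have "flz w \<in> Zs"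
    proof -
      have "- \<lfloor>w $ i\<rfloor> \<in> {0,1}" for i
      proof -
        have "-1 \<le> w $ i" "w $ i < 1" using w unfolding HC_def by auto
        then have "\<lfloor>w $ i\<rfloor> = -1 \<or> \<lfloor>w $ i\<rfloor> = 0" by linarith
        then show ?thesis by auto
      qed
      then show ?thesis unfolding Zs_def flz_def by simp
    qed
    moreover have "w \<in> Dz (flz w)" using mem_Dz by simp
    ultimately show "w \<in> (\<Union>z\<in>Zs. Dz z)" by blast
  next
    fix w assume "w \<in> (\<Union>z\<in>Zs. Dz z)"
    then obtain z where z: "z \<in> Zs" "w + rvec z \<in> Qn" unfolding Dz_def by blast
    have "-1 \<le> w $ i \<and> w $ i < 1" for i
    proof -
      have "z $ i = 0 \<or> z $ i = 1" using z(1) unfolding Zs_def by auto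
      moreover have "0 \<le> w $ i + real_of_int (z $ i)" "w $ i + real_of_int (z $ i) < 1"
        using z(2) unfolding Qn_def by auto
      ultimately show ?thesis by auto
    qed
    then show "w \<in> HC" unfolding HC_def by simp
  qed
  have "LL -` HC = (\<Union>z\<in>Zs. LL -` Dz z)" unfolding HCeq by auto
  moreover have "(\<Sum>z\<in>Zs. emeasure lborel (LL -` Dz z)) = emeasure lborel (\<Union>z\<in>Zs. LL -` Dz z)"
  proof (rule sum_emeasure)
    show "disjoint_family_on (\<lambda>z. LL -` Dz z) Zs"
      unfolding disjoint_family_on_def using mem_Dz by auto
  qed (use finZ LL_vimage[OF Dz_borel] in auto)
  moreover have "(\<Sum>z\<in>Zs. emeasure lborel (LL -` Dz z)) = of_nat (card Zs) * emeasure lborel (LL -` Qn)"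
    using mu_Dz by simp
  ultimately show ?thesis using cardZ by simp
qed

lemma linear_LL_comp: "linear (\<lambda>e. LL e $ i)"
  by (intro linearI) (simp_all add: linear_add[OF linear_LL] linear_scale[OF linear_LL])

lemma mu_cube: "emeasure lborel {e. infnorm (LL e) \<le> 1} = ennreal (2 ^ CARD('d) / real l)"
proof -
  define N where "N = (\<Union>i. {e. LL e $ i = 1})"
  have N: "N \<in> null_sets lborel"
    unfolding N_def by (rule null_sets_UN') (use null_hyperplane[OF linear_LL_comp] in auto)
  have cb: "{e. infnorm (LL e) \<le> 1} = LL -` HC \<union> ({e. infnorm (LL e) \<le> 1} - LL -` HC)"
  proof -
    have "LL -` HC \<subseteq> {e. infnorm (LL e) \<le> 1}"
      unfolding HC_def by (auto simp: infnorm_le1_cart abs_le_iff less_imp_le)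
    then show ?thesis by blast
  qed
  have Cb: "{e. infnorm (LL e) \<le> 1} \<in> sets borel"
  proof -
    have "{w::real^'d. infnorm w \<le> 1} \<in> sets borel"
      by (intro borel_closed closed_Collect_le continuous_intros continuous_on_infnorm)
    from LL_vimage[OF this] show ?thesis by (simp add: vimage_def)
  qed
  have HCb: "HC \<in> sets borel" unfolding HC_def by measurable
  have sub: "{e. infnorm (LL e) \<le> 1} - LL -` HC \<subseteq> N"
  proof
    fix e assume e: "e \<in> {e. infnorm (LL e) \<le> 1} - LL -` HC"
    then have "\<forall>i. \<bar>LL e $ i\<bar> \<le> 1" by (simp add: infnorm_le1_cart)
    moreover have "\<not> (\<forall>i. -1 \<le> LL e $ i \<and> LL e $ i < 1)" using e unfolding HC_def by simp
    ultimately obtain i where "LL e $ i = 1" by (auto simp: abs_le_iff) (meson linorder_not_le order_antisym_conv)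
    then show "e \<in> N" unfolding N_def by blast
  qed
  then have "{e. infnorm (LL e) \<le> 1} - LL -` HC \<in> null_sets lborel"
    using null_sets_subset[OF N _ sub] Cb LL_vimage[OF HCb] by auto
  then have "emeasure lborel {e. infnorm (LL e) \<le> 1} = emeasure lborel (LL -` HC)"
    by (subst cb) (rule emeasure_Un_null_set, use LL_vimage[OF HCb] in auto)
  also have "\<dots> = 2 ^ CARD('d) * ennreal (1 / real l)" using mu_HC muQ by simp
  also have "\<dots> = ennreal (2 ^ CARD('d)) * ennreal (1 / real l)"
    by (subst ennreal_power[symmetric]) auto
  also have "\<dots> = ennreal (2 ^ CARD('d) * (1 / real l))"
    by (rule ennreal_mult[symmetric]) auto
  finally show ?thesis by simp
qed

end



context L51 begin

lemma integral_eq: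
  "(\<integral>\<^sup>+ y. indicator (Cset (colmat u) (colmat v)) y * Vol (colmat u) (colmat v) y \<partial>lborel)
     = ennreal (2 ^ CARD('d) / real l)"
proof -
  define S where "S = {e. infnorm (LL e) \<le> 1}"
  have Sb: "S \<in> sets borel"
  proof -
    have "{w::real^'d. infnorm w \<le> 1} \<in> sets borel"
      by (intro borel_closed closed_Collect_le continuous_intros continuous_on_infnorm)
    from LL_vimage[OF this] show ?thesis unfolding S_def by (simp add: vimage_def)
  qed
  have P: "Pair y -` S = Pset (colmat u) (colmat v) y" for y
    unfolding S_def Pset_def LL_def by auto
  have I: "indicator (Cset (colmat u) (colmat v)) y * Vol (colmat u) (colmat v) y = emeasure lborel (Pair y -` S)" for y
  proof (cases "y \<in> Cset (colmat u) (colmat v)")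
    case True then show ?thesis unfolding Vol_def P by simp
  next
    case False
    then have "Pset (colmat u) (colmat v) y = {}" unfolding Cset_def Pset_def by auto
    then show ?thesis using False unfolding Vol_def P by simp
  qed
  have "emeasure lborel S = emeasure (lborel \<Otimes>\<^sub>M lborel) S" by (simp only: lborel_prod)
  also have "\<dots> = (\<integral>\<^sup>+ y. emeasure lborel (Pair y -` S) \<partial>lborel)"
  proof (rule lborel.emeasure_pair_measure_alt)
    show "S \<in> sets (lborel \<Otimes>\<^sub>M lborel)" using Sb by (simp only: lborel_prod sets_lborel)
  qed
  finally have "(\<integral>\<^sup>+ y. emeasure lborel (Pair y -` S) \<partial>lborel) = ennreal (2 ^ CARD('d) / real l)"
    using mu_cube unfolding S_def by simp
  then show ?thesis using I by simp
qed

lemma limit_part: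
  "(\<lambda>n::nat. (1 / real n ^ CARD('p)) *
      (\<Sum>t\<in>{t\<in>H. Nfun (zspan v) t \<le> n}. real (mcount (zspan v) t n) / real n ^ CARD('q)))
    \<longlonglongrightarrow> 2 ^ CARD('d)"
proof -
  have "((\<lambda>n::nat. (2 + 1 / real n) ^ CARD('d)) \<longlongrightarrow> (2 + 0) ^ CARD('d)) sequentially"
    by (intro tendsto_intros)
  then have lim: "((\<lambda>n::nat. (2 + 1 / real n) ^ CARD('d)) \<longlongrightarrow> 2 ^ CARD('d)) sequentially" by simp
  have ev: "\<forall>\<^sub>F n in sequentially. (2 + 1 / real n) ^ CARD('d) =
      (1 / real n ^ CARD('p)) * (\<Sum>t\<in>{t\<in>H. Nfun (zspan v) t \<le> n}. real (mcount (zspan v) t n) / real n ^ CARD('q))"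
    using eventually_ge_at_top[of "1::nat"]
  proof eventually_elim
    case (elim n)
    then have n0: "real n > 0" by simp
    have "(\<Sum>t\<in>{t\<in>H. Nfun (zspan v) t \<le> n}. real (mcount (zspan v) t n) / real n ^ CARD('q))
        = real (\<Sum>t\<in>{t\<in>H. Nfun (zspan v) t \<le> n}. mcount (zspan v) t n) / real n ^ CARD('q)"
      by (simp add: sum_divide_distrib)
    also have "\<dots> = (2 * real n + 1) ^ CARD('d) / real n ^ CARD('q)"
      unfolding sum_mcount by (simp add: add.commute)
    finally have "(1 / real n ^ CARD('p)) * (\<Sum>t\<in>{t\<in>H. Nfun (zspan v) t \<le> n}. real (mcount (zspan v) t n) / real n ^ CARD('q))
        = (2 * real n + 1) ^ CARD('d) / (real n ^ CARD('p) * real n ^ CARD('q))" by simp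
    also have "\<dots> = (2 * real n + 1) ^ CARD('d) / real n ^ CARD('d)"
      by (simp add: dim power_add)
    also have "\<dots> = ((2 * real n + 1) / real n) ^ CARD('d)" by (simp add: power_divide)
    also have "(2 * real n + 1) / real n = 2 + 1 / real n" using n0 by (simp add: field_simps)
    finally show ?case by simp
  qed
  show ?thesis by (rule Lim_transform_eventually[OF lim ev])
qed

end

theorem lemma5p1:
  fixes u :: "'p::finite \<Rightarrow> int ^ 'd::finite"
    and v :: "'q::finite \<Rightarrow> int ^ 'd"
    and x :: "nat \<Rightarrow> int ^ 'd"
    and l :: nat
  assumes dim: "CARD('d) = CARD('p) + CARD('q)"
    and indep_u: "zindep u"
    and indep_v: "zindep v"
    and FK: "zspan u \<inter> zspan v = {0}"
    and cover: "\<forall>s::int ^ 'd. \<exists>k\<in>{1..l}. s - x k \<in> {f + w | f w. f \<in> zspan u \<and> w \<in> zspan v}"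
    and distinct: "\<forall>j\<in>{1..l}. \<forall>k\<in>{1..l}.
                    x j - x k \<in> {f + w | f w. f \<in> zspan u \<and> w \<in> zspan v} \<longrightarrow> j = k"
  shows "(\<exists>\<kappa>0>0. \<forall>t\<in>(\<Union>k\<in>{1..l}. (\<lambda>f. x k + f) ` zspan u). \<forall>n::nat\<ge>1.
            real (mcount (zspan v) t n) / real n ^ CARD('q) \<le> \<kappa>0)
       \<and> (\<integral>\<^sup>+ y. indicator (Cset (colmat u) (colmat v)) y * Vol (colmat u) (colmat v) y \<partial>lborel) < \<infinity>
       \<and> (\<lambda>n::nat. (1 / real n ^ CARD('p)) *
             (\<Sum>t\<in>{t\<in>(\<Union>k\<in>{1..l}. (\<lambda>f. x k + f) ` zspan u). Nfun (zspan v) t \<le> n}.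
                 real (mcount (zspan v) t n) / real n ^ CARD('q)))
          \<longlonglongrightarrow> real l * enn2real (\<integral>\<^sup>+ y. indicator (Cset (colmat u) (colmat v)) y
                                           * Vol (colmat u) (colmat v) y \<partial>lborel)"
  proof -
  interpret L51 u v x l by (rule L51.intro[OF dim indep_u indep_v FK cover distinct])
  have Heq: "(\<Union>k\<in>{1..l}. (\<lambda>f. x k + f) ` zspan u) = H" unfolding H_def by simp
  obtain \<kappa>0 where k0: "\<kappa>0 > 0" "\<forall>t. \<forall>n::nat\<ge>1. real (mcount (zspan v) t n) \<le> \<kappa>0 * real n ^ CARD('q)"
    using kappa_bound by blast
  have P1: "\<exists>\<kappa>0>0. \<forall>t\<in>(\<Union>k\<in>{1..l}. (\<lambda>f. x k + f) ` zspan u). \<forall>n::nat\<ge>1.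
            real (mcount (zspan v) t n) / real n ^ CARD('q) \<le> \<kappa>0"
  proof (intro exI[of _ \<kappa>0] conjI ballI allI impI)
    fix t and n :: nat assume n: "n \<ge> 1"
    then have "real n ^ CARD('q) > 0" by simp
    then show "real (mcount (zspan v) t n) / real n ^ CARD('q) \<le> \<kappa>0"
      using k0(2) n by (simp add: divide_le_eq)
  qed (use k0 in simp)
  have I: "(\<integral>\<^sup>+ y. indicator (Cset (colmat u) (colmat v)) y * Vol (colmat u) (colmat v) y \<partial>lborel)
     = ennreal (2 ^ CARD('d) / real l)" by (rule integral_eq)
  have "real l * enn2real (ennreal (2 ^ CARD('d) / real l)) = 2 ^ CARD('d)"
    using l_pos by simp
  then show ?thesis using P1 I limit_part unfolding Heq by simp
qed

end
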